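(* Consider the following remote estimation model over the finite horizon $t=0,1,\ldots,T$. A scalar process evolves as $x(t+1)=a x(t)+w(t)$, with $a\in\mathbb{R}$, $x(0)\sim\mathcal{N}(0,1)$ and $\{w(t)\}$ i.i.d. $\mathcal{N}(0,\sigma^2)$. A channel state process $\{c(t)\}\subset\{0,1\}$ is a two-state Markov chain with $\mathbb{P}(c(t+1)=1\mid c(t)=0)=p_{01}$ and $\mathbb{P}(c(t+1)=0\mid c(t)=1)=p_{10}$. At each time $t$ a sensor chooses $u(t)\in\{0,1\}$ by $u(t)=\phi_t(\mathcal{I}(t))$, where $\phi_t$ is measurable and $\mathcal{I}(t)=(\{x(s),c(s)\}_{s=0}^{t},\{u(s)\}_{s=0}^{t-1})$. The estimator satisfies $\hat{x}(0)=0$, and for $t\ge 1$, $\hat{x}(t)=a\hat{x}(t-1)$ if $u(t)c(t)=0$ and $\hat{x}(t)=x(t)$ if $u(t)c(t)=1$. Define the error $\Delta(0)=0$ and $\Delta(t)=x(t)-a\hat{x}(t-1)$, and the cost $d(\Delta,c,u)=\lambda u+(1-uc)\Delta^2$ with $\lambda>0$. For $\gamma>0$ consider the problem of minimizing $\mathbb{E}_{\phi}\big[\exp\big(\gamma\sum_{t=0}^{T} d(\Delta(t),c(t),u(t))\big)\big]$ over policies $\phi=(\phi_0,\ldots,\phi_T)$. Then there is no loss of optimality in restricting to policies of the form $u(t)=\phi_t(\Delta(t),c(t))$; i.e., $\{(\Delta(t),c(t))\}$ is a controlled Markov process (an information state) with control $u(t)$, and the problem is a Markov decision process with state space $\mathbb{R}\times\{0,1\}$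 and action space $\{0,1\}$.
   Context: $\mathbb{E}_\phi$ denotes expectation under the probability measure induced by the policy $\phi$. The error evolves as $\Delta(t+1)=a\Delta(t)+w(t)$ if $u(t)c(t)=0$ and $\Delta(t+1)=w(t)$ if $u(t)c(t)=1$. *)

theory Defs
  imports "HOL-Probability.Probability"
begin

text \<open>Sample point omega = (x0, w, c): initial state x(0), noise sequence w(0..T-1),
  channel trajectory c(0..T) (True = state 1, False = state 0).
  Actions u(t) are booleans (True = transmit).\<close>

fun xproc :: "real \<Rightarrow> real \<Rightarrow> (nat \<Rightarrow> real) \<Rightarrow> nat \<Rightarrow> real" where
  "xproc a x0 w 0 = x0"
| "xproc a x0 w (Suc t) = a * xproc a x0 w t + w t"

text \<open>A decision rule g t xs cs uh delta gives u(t) from the whole state trajectory xs,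
  the channel trajectory cs, the past actions uh (entries s < t meaningful) and the
  current error delta = Delta(t).  Concrete policies below only look at admissible parts.\<close>
type_synonym rule = "nat \<Rightarrow> (nat \<Rightarrow> real) \<Rightarrow> (nat \<Rightarrow> bool) \<Rightarrow> (nat \<Rightarrow> bool) \<Rightarrow> real \<Rightarrow> bool"

text \<open>sim g a xs cs t = (u(0..t) as a function (False elsewhere), xhat(t)).\<close>
fun sim :: "rule \<Rightarrow> real \<Rightarrow> (nat \<Rightarrow> real) \<Rightarrow> (nat \<Rightarrow> bool) \<Rightarrow> nat \<Rightarrow> (nat \<Rightarrow> bool) \<times> real" where
  "sim g a xs cs 0 = ((\<lambda>_. False)(0 := g 0 xs cs (\<lambda>_. False) 0), 0)"
| "sim g a xs cs (Suc t) =
     (let (uh, xh) = sim g a xs cs t;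
          \<delta> = xs (Suc t) - a * xh;
          u = g (Suc t) xs cs uh \<delta>
      in (uh(Suc t := u), if u \<and> cs (Suc t) then xs (Suc t) else a * xh))"

definition Delta :: "rule \<Rightarrow> real \<Rightarrow> (nat \<Rightarrow> real) \<Rightarrow> (nat \<Rightarrow> bool) \<Rightarrow> nat \<Rightarrow> real" where
  "Delta g a xs cs t = (if t = 0 then 0 else xs t - a * snd (sim g a xs cs (t - 1)))"

definition act :: "rule \<Rightarrow> real \<Rightarrow> (nat \<Rightarrow> real) \<Rightarrow> (nat \<Rightarrow> bool) \<Rightarrow> nat \<Rightarrow> bool" where
  "act g a xs cs t = fst (sim g a xs cs t) t"

definition stage_cost :: "real \<Rightarrow> real \<Rightarrow> bool \<Rightarrow> bool \<Rightarrow> real" where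
  "stage_cost lam \<delta> c u = lam * of_bool u + (1 - of_bool (u \<and> c)) * \<delta>\<^sup>2"

definition total_cost :: "nat \<Rightarrow> real \<Rightarrow> real \<Rightarrow> rule \<Rightarrow> real \<times> (nat \<Rightarrow> real) \<times> (nat \<Rightarrow> bool) \<Rightarrow> real" where
  "total_cost T a lam g \<omega> =
     (case \<omega> of (x0, w, cs) \<Rightarrow>
        (let xs = xproc a x0 w in
         \<Sum>t\<le>T. stage_cost lam (Delta g a xs cs t) (cs t) (act g a xs cs t)))"

definition chan_trans :: "real \<Rightarrow> real \<Rightarrow> bool \<Rightarrow> bool \<Rightarrow> real" where
  "chan_trans p01 p10 b b' =
     (if b then (if b' then 1 - p10 else p10) else (if b' then p01 else 1 - p01))"

definition chan_measure :: "nat \<Rightarrow> real \<Rightarrow> real \<Rightarrow> real \<Rightarrow> (nat \<Rightarrow> bool) measure" where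
  "chan_measure T q p01 p10 =
     point_measure {cs. \<forall>t>T. cs t = False}
       (\<lambda>cs. ennreal ((if cs 0 then q else 1 - q) * (\<Prod>t<T. chan_trans p01 p10 (cs t) (cs (Suc t)))))"

definition model :: "nat \<Rightarrow> real \<Rightarrow> real \<Rightarrow> real \<Rightarrow> real \<Rightarrow>
    (real \<times> (nat \<Rightarrow> real) \<times> (nat \<Rightarrow> bool)) measure" where
  "model T \<sigma> q p01 p10 =
     density lborel (normal_density 0 1)
     \<Otimes>\<^sub>M (PiM {..<T} (\<lambda>_. density lborel (normal_density 0 \<sigma>))
     \<Otimes>\<^sub>M chan_measure T q p01 p10)"

definition risk_cost :: "nat \<Rightarrow> real \<Rightarrow> real \<Rightarrow> real \<Rightarrow> real \<Rightarrow> real \<Rightarrow> real \<Rightarrow> real \<Rightarrow> rule \<Rightarrow> ennreal" where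
  "risk_cost T a \<sigma> q p01 p10 lam \<gamma> g =
     (\<integral>\<^sup>+ \<omega>. ennreal (exp (\<gamma> * total_cost T a lam g \<omega>)) \<partial>model T \<sigma> q p01 p10)"

type_synonym hist_policy = "nat \<Rightarrow> (nat \<Rightarrow> real) \<times> (nat \<Rightarrow> bool) \<times> (nat \<Rightarrow> bool) \<Rightarrow> bool"

definition info_space :: "nat \<Rightarrow> ((nat \<Rightarrow> real) \<times> (nat \<Rightarrow> bool) \<times> (nat \<Rightarrow> bool)) measure" where
  "info_space t = PiM {..t} (\<lambda>_. borel) \<Otimes>\<^sub>M (PiM {..t} (\<lambda>_. count_space UNIV)
                    \<Otimes>\<^sub>M PiM {..<t} (\<lambda>_. count_space UNIV))"

definition hist_policies :: "nat \<Rightarrow> hist_policy set" where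
  "hist_policies T = {\<phi>. \<forall>t\<le>T. \<phi> t \<in> info_space t \<rightarrow>\<^sub>M count_space UNIV}"

definition hist_rule :: "hist_policy \<Rightarrow> rule" where
  "hist_rule \<phi> = (\<lambda>t xs cs uh \<delta>. \<phi> t (restrict xs {..t}, restrict cs {..t}, restrict uh {..<t}))"

type_synonym markov_policy = "nat \<Rightarrow> real \<Rightarrow> bool \<Rightarrow> bool"

definition markov_policies :: "nat \<Rightarrow> markov_policy set" where
  "markov_policies T = {\<psi>. \<forall>t\<le>T. (\<lambda>(\<delta>, b). \<psi> t \<delta> b) \<in> borel \<Otimes>\<^sub>M count_space UNIV \<rightarrow>\<^sub>M count_space UNIV}"

definition markov_rule :: "markov_policy \<Rightarrow> rule" where
  "markov_rule \<psi> = (\<lambda>t xs cs uh \<delta>. \<psi> t \<delta> (cs t))"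

end

theory Submission
  imports Defs
begin

abbreviation U where "U g a xs cs t \<equiv> fst (sim g a xs cs t)"
abbreviation XH where "XH g a xs cs t \<equiv> snd (sim g a xs cs t)"

lemma U_0: "U g a xs cs 0 = (\<lambda>_. False)(0 := g 0 xs cs (\<lambda>_. False) 0)" by simp
lemma XH_0: "XH g a xs cs 0 = 0" by simp
lemma U_Suc: "U g a xs cs (Suc t) = (U g a xs cs t)(Suc t := g (Suc t) xs cs (U g a xs cs t) (xs (Suc t) - a * XH g a xs cs t))"
  by (simp add: Let_def split: prod.split)
lemma XH_Suc: "XH g a xs cs (Suc t) = (if g (Suc t) xs cs (U g a xs cs t) (xs (Suc t) - a * XH g a xs cs t) \<and> cs (Suc t) then xs (Suc t) else a * XH g a xs cs t)"
  by (simp add: Let_def split: prod.split)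

declare sim.simps(2)[simp del]

lemma Delta_0[simp]: "Delta g a xs cs 0 = 0" by (simp add: Delta_def)
lemma Delta_Suc: "Delta g a xs cs (Suc t) = xs (Suc t) - a * XH g a xs cs t" by (simp add: Delta_def)
lemma act_0: "act g a xs cs 0 = g 0 xs cs (\<lambda>_. False) 0" by (simp add: act_def)
lemma act_Suc: "act g a xs cs (Suc t) = g (Suc t) xs cs (U g a xs cs t) (Delta g a xs cs (Suc t))"
  by (simp add: act_def U_Suc Delta_Suc)
lemma XH_Suc': "XH g a xs cs (Suc t) = (if act g a xs cs (Suc t) \<and> cs (Suc t) then xs (Suc t) else a * XH g a xs cs t)"
  by (simp add: XH_Suc act_Suc Delta_Suc)

lemma U_gt: "t < s \<Longrightarrow> U g a xs cs t s = False"
  by (induction t) (auto simp: U_Suc)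
lemma U_le: "s \<le> t \<Longrightarrow> U g a xs cs t s = act g a xs cs s"
proof (induction t)
  case 0 then show ?case by (simp add: act_def)
next
  case (Suc t) then show ?case
    by (cases "s = Suc t") (auto simp: U_Suc act_def)
qed

definition causal :: "rule \<Rightarrow> bool" where
  "causal g \<longleftrightarrow> (\<forall>t xs xs' cs cs' uh uh' \<delta>. (\<forall>s\<le>t. xs s = xs' s) \<longrightarrow> (\<forall>s\<le>t. cs s = cs' s)
      \<longrightarrow> (\<forall>s<t. uh s = uh' s) \<longrightarrow> g t xs cs uh \<delta> = g t xs' cs' uh' \<delta>)"

lemma sim_causal:
  assumes "causal g" "\<forall>s\<le>t. xs s = xs' s" "\<forall>s\<le>t. cs s = cs' s"
  shows "sim g a xs cs t = sim g a xs' cs' t"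
  using assms(2,3)
proof (induction t)
  case 0
  have "g 0 xs cs (\<lambda>_. False) 0 = g 0 xs' cs' (\<lambda>_. False) 0"
    using assms(1) 0 unfolding causal_def by blast
  then show ?case by simp
next
  case (Suc t)
  have IH: "sim g a xs cs t = sim g a xs' cs' t" using Suc by auto
  have geq: "g (Suc t) xs cs (U g a xs cs t) (xs (Suc t) - a * XH g a xs cs t)
      = g (Suc t) xs' cs' (U g a xs' cs' t) (xs' (Suc t) - a * XH g a xs' cs' t)"
  proof -
    have d: "xs (Suc t) - a * XH g a xs cs t = xs' (Suc t) - a * XH g a xs' cs' t"
      using Suc.prems IH by simp
    have "g (Suc t) xs cs (U g a xs cs t) (xs' (Suc t) - a * XH g a xs' cs' t)
      = g (Suc t) xs' cs' (U g a xs' cs' t) (xs' (Suc t) - a * XH g a xs' cs' t)"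
      using assms(1)[unfolded causal_def, rule_format, of "Suc t" xs xs' cs cs' "U g a xs cs t" "U g a xs' cs' t"]
        Suc.prems IH by simp
    then show ?thesis using d by simp
  qed
  have x: "xs (Suc t) = xs' (Suc t)" "cs (Suc t) = cs' (Suc t)" using Suc.prems by auto
  show ?case
  proof (rule prod_eqI)
    show "U g a xs cs (Suc t) = U g a xs' cs' (Suc t)"
      unfolding U_Suc using geq IH x by simp
    show "XH g a xs cs (Suc t) = XH g a xs' cs' (Suc t)"
      unfolding XH_Suc using geq IH x by simp
  qed
qed

lemma Delta_causal:
  assumes "causal g" "\<forall>s\<le>t. xs s = xs' s" "\<forall>s\<le>t. cs s = cs' s"
  shows "Delta g a xs cs t = Delta g a xs' cs' t"
  using sim_causal[OF assms(1), of "t - 1" xs xs' cs cs' a] assms(2,3)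
  by (auto simp: Delta_def)

lemma act_causal:
  assumes "causal g" "\<forall>s\<le>t. xs s = xs' s" "\<forall>s\<le>t. cs s = cs' s"
  shows "act g a xs cs t = act g a xs' cs' t"
  using sim_causal[OF assms] by (simp add: act_def)

lemma xproc_causal: "\<forall>s<t. w s = w' s \<Longrightarrow> xproc a x0 w t = xproc a x0 w' t"
  by (induction t) auto

lemma causal_hist: "causal (hist_rule \<phi>)"
  unfolding causal_def hist_rule_def
proof (intro allI impI)
  fix t :: nat and xs xs' :: "nat \<Rightarrow> real" and cs cs' uh uh' :: "nat \<Rightarrow> bool" and \<delta> :: real
  assume h: "\<forall>s\<le>t. xs s = xs' s" "\<forall>s\<le>t. cs s = cs' s" "\<forall>s<t. uh s = uh' s"
  have "restrict xs {..t} = restrict xs' {..t}" "restrict cs {..t} = restrict cs' {..t}"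
       "restrict uh {..<t} = restrict uh' {..<t}"
    using h by (auto simp: restrict_def)
  then show "\<phi> t (restrict xs {..t}, restrict cs {..t}, restrict uh {..<t}) =
             \<phi> t (restrict xs' {..t}, restrict cs' {..t}, restrict uh' {..<t})" by simp
qed

lemma causal_markov: "causal (markov_rule \<psi>)"
  unfolding causal_def markov_rule_def by auto



locale rem =
  fixes T :: nat and a \<sigma> q p01 p10 lam \<gamma> :: real
  assumes sig: "\<sigma> > 0" and lam: "lam > 0" and gam: "\<gamma> > 0"
    and q0: "0 \<le> q" and q1: "q \<le> 1" and p010: "0 \<le> p01" and p011: "p01 \<le> 1"
    and p100: "0 \<le> p10" and p101: "p10 \<le> 1"
begin

definition NN :: "real measure" where "NN = density lborel (normal_density 0 \<sigma>)"
definition ctw :: "bool \<Rightarrow> bool \<Rightarrow> ennreal" where "ctw c b = ennreal (chan_trans p01 p10 c b)"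
definition qw :: "bool \<Rightarrow> ennreal" where "qw b = ennreal (if b then q else 1 - q)"

lemma prob_NN: "prob_space NN" unfolding NN_def by (rule prob_space_normal_density[OF sig])
lemma sf_NN: "sigma_finite_measure NN"
  using prob_NN by (simp add: prob_space_imp_sigma_finite)
lemma space_NN[simp]: "space NN = UNIV" by (simp add: NN_def)
lemma sets_NN[measurable_cong, simp]: "sets NN = sets borel" by (simp add: NN_def)

lemma psf: "product_sigma_finite (\<lambda>_. NN)"
  unfolding product_sigma_finite_def using sf_NN by simp

primrec Ik :: "nat \<Rightarrow> nat \<Rightarrow> (real \<Rightarrow> (nat\<Rightarrow>real) \<Rightarrow> (nat\<Rightarrow>bool) \<Rightarrow> ennreal) \<Rightarrow> real \<Rightarrow> (nat\<Rightarrow>real) \<Rightarrow> (nat\<Rightarrow>bool) \<Rightarrow> ennreal" where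
  "Ik 0 t F x0 w cs = F x0 w cs"
| "Ik (Suc m) t F x0 w cs = (\<integral>\<^sup>+v. (\<Sum>b\<in>UNIV. ctw (cs t) b * Ik m (Suc t) F x0 (w(t:=v)) (cs(Suc t := b))) \<partial>NN)"

primrec Jk :: "nat \<Rightarrow> nat \<Rightarrow> ((nat\<Rightarrow>real) \<Rightarrow> ennreal) \<Rightarrow> (nat\<Rightarrow>real) \<Rightarrow> ennreal" where
  "Jk 0 t G w = G w"
| "Jk (Suc m) t G w = (\<integral>\<^sup>+v. Jk m (Suc t) G (w(t:=v)) \<partial>NN)"

abbreviation PP where "PP t \<equiv> PiM {..<t} (\<lambda>_. NN)"

lemma Jk_meas:
  assumes G: "G \<in> borel_measurable (PP T)"
  shows "t + m = T \<Longrightarrow> Jk m t G \<in> borel_measurable (PP t)"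
proof (induction m arbitrary: t)
  case 0 then show ?case using G by simp
next
  case (Suc m)
  have IH: "Jk m (Suc t) G \<in> borel_measurable (PP (Suc t))" using Suc by simp
  have e: "{..<Suc t} = insert t {..<t}" by auto
  have "(\<lambda>(w, v). w(t := v)) \<in> measurable (PP t \<Otimes>\<^sub>M NN) (PP (Suc t))"
    unfolding e using measurable_add_dim[of t "{..<t}" "\<lambda>_. NN"] by simp
  then have "(\<lambda>(w, v). Jk m (Suc t) G (w(t := v))) \<in> borel_measurable (PP t \<Otimes>\<^sub>M NN)"
    using IH by (simp add: measurable_comp[OF _ IH, unfolded comp_def] split_beta')
  then have "(\<lambda>w. \<integral>\<^sup>+v. Jk m (Suc t) G (w(t:=v)) \<partial>NN) \<in> borel_measurable (PP t)"
    using sigma_finite_measure.borel_measurable_nn_integral[OF sf_NN, of "\<lambda>w v. Jk m (Suc t) G (w(t:=v))"]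
    by simp
  then show ?case by simp
qed

lemma Jk_int:
  assumes G: "G \<in> borel_measurable (PP T)"
  shows "t + m = T \<Longrightarrow> integral\<^sup>N (PP t) (Jk m t G) = integral\<^sup>N (PP T) G"
proof (induction m arbitrary: t)
  case 0 then show ?case by simp
next
  case (Suc m)
  have e: "{..<Suc t} = insert t {..<t}" by auto
  have M: "Jk m (Suc t) G \<in> borel_measurable (PiM (insert t {..<t}) (\<lambda>_. NN))"
    using Jk_meas[OF G, of "Suc t" m] Suc.prems e by simp
  have eqJ: "Jk (Suc m) t G = (\<lambda>w. \<integral>\<^sup>+v. Jk m (Suc t) G (w(t:=v)) \<partial>NN)"
    by (simp add: fun_eq_iff)
  have "integral\<^sup>N (PP t) (Jk (Suc m) t G) = integral\<^sup>N (PiM (insert t {..<t}) (\<lambda>_. NN)) (Jk m (Suc t) G)"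
    using product_sigma_finite.product_nn_integral_insert[OF psf, of "{..<t}" t, OF _ _ M] eqJ by simp
  also have "\<dots> = integral\<^sup>N (PP T) G"
  proof -
    have "integral\<^sup>N (PP (Suc t)) (Jk m (Suc t) G) = integral\<^sup>N (PP T) G"
      by (rule Suc.IH) (use Suc.prems in simp)
    then show ?thesis unfolding e .
  qed
  finally show ?case .
qed

lemma Jk_top:
  assumes G: "G \<in> borel_measurable (PP T)"
  shows "Jk T 0 G (\<lambda>_. undefined) = integral\<^sup>N (PP T) G"
proof -
  have "integral\<^sup>N (PP 0) (Jk T 0 G) = Jk T 0 G (\<lambda>_. undefined)"
    using product_sigma_finite.nn_integral_empty[OF psf] by simp
  then show ?thesis using Jk_int[OF G, of 0 T] by simp
qed

definition ext :: "nat \<Rightarrow> nat \<Rightarrow> (nat \<Rightarrow> bool) \<Rightarrow> (nat \<Rightarrow> bool) set" where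
  "ext m t cs = {cs'. (\<forall>s\<le>t. cs' s = cs s) \<and> (\<forall>s>t+m. cs' s = False)}"
definition Pw :: "nat \<Rightarrow> nat \<Rightarrow> (nat \<Rightarrow> bool) \<Rightarrow> ennreal" where
  "Pw m t cs' = (\<Prod>s\<in>{t..<t+m}. ctw (cs' s) (cs' (Suc s)))"

lemma finite_bounded_bool: "finite {cs :: nat \<Rightarrow> bool. \<forall>s>n. cs s = False}"
proof -
  have "{cs :: nat \<Rightarrow> bool. \<forall>s>n. cs s = False} \<subseteq> (\<lambda>S s. s \<in> S) ` Pow {..n}"
  proof
    fix cs :: "nat \<Rightarrow> bool" assume h: "cs \<in> {cs. \<forall>s>n. cs s = False}"
    have "cs = (\<lambda>s. s \<in> {s. s \<le> n \<and> cs s})"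
    proof (rule ext)
      fix s show "cs s = (s \<in> {s. s \<le> n \<and> cs s})" using h by (cases "s \<le> n") auto
    qed
    moreover have "{s. s \<le> n \<and> cs s} \<in> Pow {..n}" by auto
    ultimately show "cs \<in> (\<lambda>S s. s \<in> S) ` Pow {..n}" by (rule image_eqI)
  qed
  then show ?thesis by (rule finite_subset) auto
qed


lemma finite_ext: "finite (ext m t cs)"
  by (rule finite_subset[OF _ finite_bounded_bool[of "t+m"]]) (auto simp: ext_def)

lemma ext_Suc: "ext (Suc m) t cs = (\<Union>b. ext m (Suc t) (cs(Suc t := b)))"
proof (intro set_eqI iffI)
  fix x assume x: "x \<in> ext (Suc m) t cs"
  then have "x \<in> ext m (Suc t) (cs(Suc t := x (Suc t)))"
    unfolding ext_def by (auto simp: le_Suc_eq)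
  then show "x \<in> (\<Union>b. ext m (Suc t) (cs(Suc t := b)))" by blast
next
  fix x assume "x \<in> (\<Union>b. ext m (Suc t) (cs(Suc t := b)))"
  then obtain b where x: "x \<in> ext m (Suc t) (cs(Suc t := b))" by blast
  show "x \<in> ext (Suc m) t cs"
    unfolding ext_def
  proof (intro CollectI conjI allI impI)
    fix s assume s: "s \<le> t"
    have "\<forall>s'\<le>Suc t. x s' = (cs(Suc t := b)) s'" using x by (simp add: ext_def)
    then have "x s = (cs(Suc t := b)) s" using s by simp
    then show "x s = cs s" using s by simp
  next
    fix s assume s: "s > t + Suc m"
    have "\<forall>s'>Suc t + m. x s' = False" using x by (simp add: ext_def)
    then show "x s = False" using s by simp
  qed
qed

lemma ext_at: "x \<in> ext m (Suc t) (cs(Suc t := b)) \<Longrightarrow> x (Suc t) = b"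
  by (simp add: ext_def)

lemma Pw_Suc: "cs' t = c \<Longrightarrow> Pw (Suc m) t cs' = ctw c (cs' (Suc t)) * Pw m (Suc t) cs'"
  unfolding Pw_def by (simp add: prod.atLeast_Suc_lessThan mult.assoc)

lemma sum_ext_Suc:
  "(\<Sum>cs'\<in>ext (Suc m) t cs. f cs') = (\<Sum>b\<in>UNIV. \<Sum>cs'\<in>ext m (Suc t) (cs(Suc t := b)). f cs')"
proof -
  have "(\<Sum>cs'\<in>ext (Suc m) t cs. f cs') = (\<Sum>cs'\<in>(\<Union>b\<in>UNIV. ext m (Suc t) (cs(Suc t := b))). f cs')"
    by (simp add: ext_Suc)
  also have "\<dots> = (\<Sum>b\<in>UNIV. \<Sum>cs'\<in>ext m (Suc t) (cs(Suc t := b)). f cs')"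
    by (rule sum.UNION_disjoint) (simp_all add: finite_ext, blast dest: ext_at)
  finally show ?thesis .
qed

end

context rem begin

lemma Ik_Jk:
  assumes "t + m = T" "w \<in> space (PP t)" "\<forall>s>t. \<not> cs s"
    and "\<And>cs'. cs' \<in> ext m t cs \<Longrightarrow> (\<lambda>w. F x0 w cs') \<in> borel_measurable (PP T)"
  shows "Ik m t F x0 w cs = (\<Sum>cs'\<in>ext m t cs. Pw m t cs' * Jk m t (\<lambda>w. F x0 w cs') w)"
  using assms
proof (induction m arbitrary: t w cs)
  case 0
  have "ext 0 t cs = {cs}" using 0 by (auto simp: ext_def fun_eq_iff not_le)
    (metis linorder_not_le)+
  then show ?case by (simp add: Pw_def)
next
  case (Suc m)
  have e: "{..<Suc t} = insert t {..<t}" by auto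
  have wv: "w(t:=v) \<in> space (PP (Suc t))" for v
    using Suc.prems(2) by (auto simp: space_PiM PiE_iff extensional_def)
  have sub: "ext m (Suc t) (cs(Suc t := b)) \<subseteq> ext (Suc m) t cs" for b
    by (auto simp: ext_def)
  have meas: "(\<lambda>v. Jk m (Suc t) (\<lambda>w. F x0 w cs') (w(t:=v))) \<in> borel_measurable NN"
    if "cs' \<in> ext (Suc m) t cs" for cs'
  proof -
    have "Jk m (Suc t) (\<lambda>w. F x0 w cs') \<in> borel_measurable (PiM (insert t {..<t}) (\<lambda>_. NN))"
      using Jk_meas[OF Suc.prems(4)[OF that], of "Suc t" m] Suc.prems(1) e by simp
    then show ?thesis
      using measurable_comp[OF measurable_component_update[OF Suc.prems(2), of t] ] by (simp add: comp_def)
  qed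
  have meas': "(\<lambda>v. Jk m (Suc t) (\<lambda>w. F x0 w cs') (w(t:=v))) \<in> borel_measurable NN"
    if "cs' \<in> ext m (Suc t) (cs(Suc t := b))" for cs' b
    using meas sub that by blast
  have IH: "Ik m (Suc t) F x0 (w(t:=v)) (cs(Suc t := b)) =
     (\<Sum>cs'\<in>ext m (Suc t) (cs(Suc t := b)). Pw m (Suc t) cs' * Jk m (Suc t) (\<lambda>w. F x0 w cs') (w(t:=v)))" for v b
  proof (rule Suc.IH)
    show "Suc t + m = T" using Suc.prems(1) by simp
    show "w(t := v) \<in> space (PP (Suc t))" by (rule wv)
    show "\<forall>s>Suc t. \<not> (cs(Suc t := b)) s" using Suc.prems(3) by simp
    show "(\<lambda>w. F x0 w cs') \<in> borel_measurable (PP T)" if "cs' \<in> ext m (Suc t) (cs(Suc t := b))" for cs'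
      using Suc.prems(4) sub that by blast
  qed
  have "Ik (Suc m) t F x0 w cs = (\<integral>\<^sup>+v. (\<Sum>b\<in>UNIV. ctw (cs t) b *
      (\<Sum>cs'\<in>ext m (Suc t) (cs(Suc t := b)). Pw m (Suc t) cs' * Jk m (Suc t) (\<lambda>w. F x0 w cs') (w(t:=v)))) \<partial>NN)"
    by (simp only: Ik.simps IH)
  also have "\<dots> = (\<integral>\<^sup>+v. (\<Sum>b\<in>UNIV. \<Sum>cs'\<in>ext m (Suc t) (cs(Suc t := b)).
      ctw (cs t) b * Pw m (Suc t) cs' * Jk m (Suc t) (\<lambda>w. F x0 w cs') (w(t:=v))) \<partial>NN)"
    by (simp only: sum_distrib_left mult.assoc)
  also have "\<dots> = (\<Sum>b\<in>UNIV. \<integral>\<^sup>+v. (\<Sum>cs'\<in>ext m (Suc t) (cs(Suc t := b)).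
      ctw (cs t) b * Pw m (Suc t) cs' * Jk m (Suc t) (\<lambda>w. F x0 w cs') (w(t:=v))) \<partial>NN)"
    by (rule nn_integral_sum) (auto intro!: borel_measurable_sum borel_measurable_times_ennreal measurable_const meas')
  also have "\<dots> = (\<Sum>b\<in>UNIV. \<Sum>cs'\<in>ext m (Suc t) (cs(Suc t := b)). \<integral>\<^sup>+v.
      ctw (cs t) b * Pw m (Suc t) cs' * Jk m (Suc t) (\<lambda>w. F x0 w cs') (w(t:=v)) \<partial>NN)"
    by (rule sum.cong[OF refl], rule nn_integral_sum) (auto intro!: borel_measurable_times_ennreal measurable_const meas')
  also have "\<dots> = (\<Sum>b\<in>UNIV. \<Sum>cs'\<in>ext m (Suc t) (cs(Suc t := b)).
      ctw (cs t) b * Pw m (Suc t) cs' * (\<integral>\<^sup>+v. Jk m (Suc t) (\<lambda>w. F x0 w cs') (w(t:=v)) \<partial>NN))"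
    by (rule sum.cong[OF refl], rule sum.cong[OF refl], rule nn_integral_cmult, rule meas')
  also have "\<dots> = (\<Sum>cs'\<in>ext (Suc m) t cs. Pw (Suc m) t cs' * Jk (Suc m) t (\<lambda>w. F x0 w cs') w)"
    unfolding sum_ext_Suc
  proof (rule sum.cong[OF refl], rule sum.cong[OF refl])
    fix b cs' assume "cs' \<in> ext m (Suc t) (cs(Suc t := b))"
    then have "cs' t = cs t" "cs' (Suc t) = b" by (auto simp: ext_def)
    then show "ctw (cs t) b * Pw m (Suc t) cs' * (\<integral>\<^sup>+v. Jk m (Suc t) (\<lambda>w. F x0 w cs') (w(t:=v)) \<partial>NN)
       = Pw (Suc m) t cs' * Jk (Suc m) t (\<lambda>w. F x0 w cs') w"
      by (simp add: Pw_Suc)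
  qed
  finally show ?case .
qed

end

context rem begin

abbreviation CC where "CC \<equiv> chan_measure T q p01 p10"
abbreviation AA where "AA \<equiv> {cs :: nat \<Rightarrow> bool. \<forall>t>T. cs t = False}"
definition N1 :: "real measure" where "N1 = density lborel (normal_density 0 1)"

lemma finite_AA: "finite AA" using finite_bounded_bool[of T] by simp

lemma space_CC[simp]: "space CC = AA" by (simp add: chan_measure_def space_point_measure)
lemma sets_CC: "sets CC = Pow AA" by (simp add: chan_measure_def sets_point_measure_count_space)

lemma ct_nonneg: "0 \<le> chan_trans p01 p10 c b"
  using p010 p011 p100 p101 by (auto simp: chan_trans_def)

lemma sf_CC: "sigma_finite_measure CC"
proof -
  have "emeasure CC (space CC) = (\<Sum>cs\<in>AA. ennreal ((if cs 0 then q else 1 - q) * (\<Prod>t<T. chan_trans p01 p10 (cs t) (cs (Suc t)))))"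
    unfolding space_CC unfolding chan_measure_def by (rule emeasure_point_measure_finite[OF finite_AA]) simp
  also have "\<dots> \<noteq> \<infinity>" using finite_AA by simp
  finally have "finite_measure CC" by (rule finite_measureI)
  then show ?thesis by (rule finite_measure.axioms(1))
qed

lemma sf_PP: "sigma_finite_measure (PP t)"
  by (rule prob_space_imp_sigma_finite, rule prob_space_PiM) (rule prob_NN)

lemma sf_N1: "sigma_finite_measure N1"
  unfolding N1_def by (rule prob_space_imp_sigma_finite, rule prob_space_normal_density) simp

lemma model_eq: "model T \<sigma> q p01 p10 = N1 \<Otimes>\<^sub>M (PP T \<Otimes>\<^sub>M CC)"
  by (simp add: model_def N1_def NN_def)

lemma wt_eq: "ennreal ((if cs 0 then q else 1 - q) * (\<Prod>t<T. chan_trans p01 p10 (cs t) (cs (Suc t))))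
   = qw (cs 0) * Pw T 0 cs"
proof -
  have "ennreal ((if cs 0 then q else 1 - q) * (\<Prod>t<T. chan_trans p01 p10 (cs t) (cs (Suc t))))
     = ennreal (if cs 0 then q else 1 - q) * ennreal (\<Prod>t<T. chan_trans p01 p10 (cs t) (cs (Suc t)))"
    using q0 q1 ct_nonneg by (intro ennreal_mult) (auto intro: prod_nonneg)
  also have "ennreal (\<Prod>t<T. chan_trans p01 p10 (cs t) (cs (Suc t))) = (\<Prod>t<T. ctw (cs t) (cs (Suc t)))"
    unfolding ctw_def by (rule prod_ennreal[symmetric]) (rule ct_nonneg)
  finally show ?thesis unfolding qw_def Pw_def by (simp add: atLeast0LessThan)
qed

lemma AA_union: "AA = (\<Union>b. ext T 0 ((\<lambda>_. False)(0 := b)))"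
proof (intro set_eqI iffI)
  fix x assume "x \<in> AA"
  then have "x \<in> ext T 0 ((\<lambda>_. False)(0 := x 0))" by (auto simp: ext_def)
  then show "x \<in> (\<Union>b. ext T 0 ((\<lambda>_. False)(0 := b)))" by blast
qed (auto simp: ext_def)

lemma risk_conv:
  assumes F: "F \<in> borel_measurable (model T \<sigma> q p01 p10)"
  shows "(\<integral>\<^sup>+\<omega>. F \<omega> \<partial>model T \<sigma> q p01 p10) =
    (\<integral>\<^sup>+x0. (\<Sum>b\<in>UNIV. qw b * Ik T 0 (\<lambda>x0 w cs. F (x0, w, cs)) x0 (\<lambda>_. undefined) ((\<lambda>_. False)(0 := b))) \<partial>N1)"
proof -
  have F': "F \<in> borel_measurable (N1 \<Otimes>\<^sub>M (PP T \<Otimes>\<^sub>M CC))" using F by (simp add: model_eq)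
  have sfPC: "sigma_finite_measure (PP T \<Otimes>\<^sub>M CC)" by (rule sigma_finite_pair_measure[OF sf_PP sf_CC])
  have psPC: "pair_sigma_finite (PP T) CC"
    by (simp add: pair_sigma_finite_def sf_PP sf_CC)
  have mx: "(\<lambda>y. F (x0, y)) \<in> borel_measurable (PP T \<Otimes>\<^sub>M CC)" for x0
    by (rule measurable_comp[OF _ F', unfolded comp_def]) (auto simp: N1_def)
  have mw: "(\<lambda>w. F (x0, w, cs)) \<in> borel_measurable (PP T)" if "cs \<in> AA" for x0 cs
    by (rule measurable_comp[OF _ mx, unfolded comp_def]) (use that in auto)
  have "(\<integral>\<^sup>+\<omega>. F \<omega> \<partial>model T \<sigma> q p01 p10) = (\<integral>\<^sup>+x0. \<integral>\<^sup>+y. F (x0, y) \<partial>(PP T \<Otimes>\<^sub>M CC) \<partial>N1)"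
    unfolding model_eq by (rule sigma_finite_measure.nn_integral_fst[OF sfPC F', symmetric])
  also have "\<dots> = (\<integral>\<^sup>+x0. (\<Sum>b\<in>UNIV. qw b * Ik T 0 (\<lambda>x0 w cs. F (x0, w, cs)) x0 (\<lambda>_. undefined) ((\<lambda>_. False)(0 := b))) \<partial>N1)"
  proof (rule nn_integral_cong)
    fix x0
    have "(\<integral>\<^sup>+y. F (x0, y) \<partial>(PP T \<Otimes>\<^sub>M CC)) = (\<integral>\<^sup>+cs. \<integral>\<^sup>+w. F (x0, w, cs) \<partial>PP T \<partial>CC)"
      using pair_sigma_finite.nn_integral_snd[OF psPC mx[of x0]] by simp
    also have "\<dots> = (\<Sum>cs\<in>AA. qw (cs 0) * Pw T 0 cs * (\<integral>\<^sup>+w. F (x0, w, cs) \<partial>PP T))"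
      unfolding chan_measure_def by (subst nn_integral_point_measure_finite[OF finite_AA]) (simp add: wt_eq)
    also have "\<dots> = (\<Sum>b\<in>UNIV. \<Sum>cs\<in>ext T 0 ((\<lambda>_. False)(0 := b)). qw (cs 0) * Pw T 0 cs * (\<integral>\<^sup>+w. F (x0, w, cs) \<partial>PP T))"
      by (subst AA_union, rule sum.UNION_disjoint) (simp_all add: finite_ext, auto simp: ext_def)
    also have "\<dots> = (\<Sum>b\<in>UNIV. qw b * Ik T 0 (\<lambda>x0 w cs. F (x0, w, cs)) x0 (\<lambda>_. undefined) ((\<lambda>_. False)(0 := b)))"
    proof (rule sum.cong[OF refl])
      fix b
      have sub: "ext T 0 ((\<lambda>_. False)(0 := b)) \<subseteq> AA" by (auto simp: ext_def)
      have "Ik T 0 (\<lambda>x0 w cs. F (x0, w, cs)) x0 (\<lambda>_. undefined) ((\<lambda>_. False)(0 := b))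
          = (\<Sum>cs'\<in>ext T 0 ((\<lambda>_. False)(0 := b)). Pw T 0 cs' * Jk T 0 (\<lambda>w. F (x0, w, cs')) (\<lambda>_. undefined))"
        by (rule Ik_Jk) (use mw sub in \<open>auto simp: space_PiM\<close>)
      also have "\<dots> = (\<Sum>cs'\<in>ext T 0 ((\<lambda>_. False)(0 := b)). Pw T 0 cs' * (\<integral>\<^sup>+w. F (x0, w, cs') \<partial>PP T))"
        by (rule sum.cong[OF refl]) (use mw sub in \<open>auto simp: Jk_top\<close>)
      finally show "(\<Sum>cs\<in>ext T 0 ((\<lambda>_. False)(0 := b)). qw (cs 0) * Pw T 0 cs * (\<integral>\<^sup>+w. F (x0, w, cs) \<partial>PP T))
          = qw b * Ik T 0 (\<lambda>x0 w cs. F (x0, w, cs)) x0 (\<lambda>_. undefined) ((\<lambda>_. False)(0 := b))"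
        by (simp add: sum_distrib_left ext_def mult.assoc)
    qed
    finally show "(\<integral>\<^sup>+y. F (x0, y) \<partial>(PP T \<Otimes>\<^sub>M CC)) = (\<Sum>b\<in>UNIV. qw b * Ik T 0 (\<lambda>x0 w cs. F (x0, w, cs)) x0 (\<lambda>_. undefined) ((\<lambda>_. False)(0 := b)))" .
  qed
  finally show ?thesis .
qed

end

context rem begin

definition EE :: "real \<Rightarrow> bool \<Rightarrow> bool \<Rightarrow> ennreal" where
  "EE \<delta> c u = ennreal (exp (\<gamma> * stage_cost lam \<delta> c u))"

primrec VV :: "nat \<Rightarrow> real \<Rightarrow> bool \<Rightarrow> ennreal" where
  "VV 0 \<delta> c = min (EE \<delta> c False) (EE \<delta> c True)"
| "VV (Suc k) \<delta> c = min (EE \<delta> c False * (\<integral>\<^sup>+v. (\<Sum>b\<in>UNIV. ctw c b * VV k (a*\<delta>+v) b) \<partial>NN))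
                         (EE \<delta> c True * (\<integral>\<^sup>+v. (\<Sum>b\<in>UNIV. ctw c b * VV k (if c then v else a*\<delta>+v) b) \<partial>NN))"

definition WW :: "nat \<Rightarrow> real \<Rightarrow> bool \<Rightarrow> bool \<Rightarrow> ennreal" where
  "WW k \<delta> c e = (\<integral>\<^sup>+v. (\<Sum>b\<in>UNIV. ctw c b * VV k (if e then v else a*\<delta>+v) b) \<partial>NN)"

lemma VV_Suc': "VV (Suc k) \<delta> c = min (EE \<delta> c False * WW k \<delta> c False) (EE \<delta> c True * WW k \<delta> c c)"
  by (simp add: WW_def)

lemma EE_meas[measurable]: "(\<lambda>\<delta>. EE \<delta> c u) \<in> borel_measurable borel"
  unfolding EE_def stage_cost_def by measurable

lemma VV_meas_all: "\<forall>c. (\<lambda>\<delta>. VV k \<delta> c) \<in> borel_measurable borel"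
proof (induction k)
  case 0 then show ?case by simp
next
  case (Suc k)
  have IH[measurable]: "(\<lambda>\<delta>. VV k \<delta> c) \<in> borel_measurable borel" for c using Suc by blast
  have W: "(\<lambda>\<delta>. WW k \<delta> c e) \<in> borel_measurable borel" for c e
  proof -
    have "(\<lambda>(\<delta>, v). \<Sum>b\<in>UNIV. ctw c b * VV k (if e then v else a*\<delta>+v) b) \<in> borel_measurable (borel \<Otimes>\<^sub>M NN)"
      by measurable
    then show ?thesis unfolding WW_def
      by (intro sigma_finite_measure.borel_measurable_nn_integral[OF sf_NN]) simp
  qed
  have [measurable]: "(\<lambda>\<delta>. WW k \<delta> c e) \<in> borel_measurable borel" for c e by (rule W)
  show ?case unfolding VV_Suc' by (intro allI) measurable
qed

lemma VV_meas[measurable]: "(\<lambda>\<delta>. VV k \<delta> c) \<in> borel_measurable borel"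
  using VV_meas_all by blast

lemma WW_integrand_meas[measurable]: "(\<lambda>v. \<Sum>b\<in>UNIV. ctw c b * VV k (if e then v else a*\<delta>+v) b) \<in> borel_measurable NN"
  by measurable

lemma WW_meas[measurable]: "(\<lambda>\<delta>. WW k \<delta> c e) \<in> borel_measurable borel"
proof -
  have "(\<lambda>(\<delta>, v). \<Sum>b\<in>UNIV. ctw c b * VV k (if e then v else a*\<delta>+v) b) \<in> borel_measurable (borel \<Otimes>\<^sub>M NN)"
    by measurable
  then show ?thesis unfolding WW_def
    by (intro sigma_finite_measure.borel_measurable_nn_integral[OF sf_NN]) simp
qed

definition psi :: "nat \<Rightarrow> real \<Rightarrow> bool \<Rightarrow> bool" where
  "psi t \<delta> c = (if t = 0 then False else if t < T
      then EE \<delta> c True * WW (T - t - 1) \<delta> c c < EE \<delta> c False * WW (T - t - 1) \<delta> c False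
      else EE \<delta> c True < EE \<delta> c False)"

lemma psi_pred[measurable]: "Measurable.pred borel (\<lambda>\<delta>. psi t \<delta> c)"
proof -
  have m1: "Measurable.pred borel (\<lambda>\<delta>. EE \<delta> c True * WW (T - t - 1) \<delta> c c < EE \<delta> c False * WW (T - t - 1) \<delta> c False)"
    by (rule borel_measurable_pred_less; rule borel_measurable_times_ennreal; rule EE_meas WW_meas)
  have m2: "Measurable.pred borel (\<lambda>\<delta>. EE \<delta> c True < EE \<delta> c False)"
    by (rule borel_measurable_pred_less; rule EE_meas)
  show ?thesis
  proof (cases "t = 0")
    case True then show ?thesis by (simp add: psi_def)
  next
    case False
    show ?thesis
    proof (cases "t < T")
      case True then show ?thesis using False m1 by (simp add: psi_def)
    next
      case nT: False then show ?thesis using False m2 by (simp add: psi_def)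
    qed
  qed
qed

lemma psi_markov: "psi \<in> markov_policies T"
  unfolding markov_policies_def
proof (intro CollectI allI impI)
  fix t
  have m: "(\<lambda>x. psi t (fst x) b) \<in> measurable (borel \<Otimes>\<^sub>M count_space UNIV) (count_space UNIV)" for b
    by (rule measurable_compose[OF measurable_fst psi_pred])
  have "(\<lambda>x. psi t (fst x) (snd x)) \<in> measurable (borel \<Otimes>\<^sub>M count_space UNIV) (count_space UNIV)"
    by (rule measurable_compose_countable'[where I=UNIV, OF m]) auto
  then show "(\<lambda>(\<delta>, b). psi t \<delta> b) \<in> borel \<Otimes>\<^sub>M count_space UNIV \<rightarrow>\<^sub>M count_space UNIV"
    by (simp add: split_beta')
qed

lemma psi_opt: "0 < t \<Longrightarrow> t < T \<Longrightarrow>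
   EE \<delta> c (psi t \<delta> c) * WW (T - t - 1) \<delta> c (psi t \<delta> c \<and> c) = VV (T - t) \<delta> c"
proof -
  assume t: "0 < t" "t < T"
  define k where "k = T - t - 1"
  then have e: "T - t = Suc k" using t by simp
  have ps: "psi t \<delta> c = (EE \<delta> c True * WW k \<delta> c c < EE \<delta> c False * WW k \<delta> c False)"
    using t by (simp add: psi_def k_def)
  have vv: "VV (T - t) \<delta> c = min (EE \<delta> c False * WW k \<delta> c False) (EE \<delta> c True * WW k \<delta> c c)"
    unfolding e VV_Suc' ..
  have kk: "T - t - 1 = k" by (simp add: k_def)
  show ?thesis
  proof (cases "EE \<delta> c True * WW k \<delta> c c < EE \<delta> c False * WW k \<delta> c False")
    case True
    then have p: "psi t \<delta> c = True" using ps by simp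
    show ?thesis unfolding vv kk p using True by (simp add: min_absorb2 less_imp_le)
  next
    case False
    then have p: "psi t \<delta> c = False" using ps by simp
    show ?thesis unfolding vv kk p using False by (simp add: min_def not_less)
  qed
qed

lemma psi_opt_T: "0 < T \<Longrightarrow> EE \<delta> c (psi T \<delta> c) = VV 0 \<delta> c"
proof -
  assume T: "0 < T"
  have ps: "psi T \<delta> c = (EE \<delta> c True < EE \<delta> c False)" using T by (simp add: psi_def)
  show ?thesis
  proof (cases "EE \<delta> c True < EE \<delta> c False")
    case True
    then have p: "psi T \<delta> c = True" using ps by simp
    show ?thesis unfolding p using True by (simp add: min_absorb2 less_imp_le)
  next
    case False
    then have p: "psi T \<delta> c = False" using ps by simp
    show ?thesis unfolding p using False by (simp add: min_def not_less)
  qed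
qed

end

context rem begin

definition sc :: "rule \<Rightarrow> real \<Rightarrow> (nat\<Rightarrow>real) \<Rightarrow> (nat\<Rightarrow>bool) \<Rightarrow> nat \<Rightarrow> real" where
  "sc g x0 w cs s = stage_cost lam (Delta g a (xproc a x0 w) cs s) (cs s) (act g a (xproc a x0 w) cs s)"
definition SS :: "rule \<Rightarrow> real \<Rightarrow> (nat\<Rightarrow>real) \<Rightarrow> (nat\<Rightarrow>bool) \<Rightarrow> nat \<Rightarrow> real" where
  "SS g x0 w cs t = (\<Sum>s<t. sc g x0 w cs s)"
definition Fg :: "rule \<Rightarrow> real \<Rightarrow> (nat\<Rightarrow>real) \<Rightarrow> (nat\<Rightarrow>bool) \<Rightarrow> ennreal" where
  "Fg g x0 w cs = ennreal (exp (\<gamma> * total_cost T a lam g (x0, w, cs)))"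

lemma total_SS: "total_cost T a lam g (x0, w, cs) = SS g x0 w cs (Suc T)"
  by (simp add: total_cost_def SS_def sc_def lessThan_Suc_atMost Let_def)

lemma stage_nonneg: "0 \<le> stage_cost lam \<delta> c u"
  using lam by (auto simp: stage_cost_def)

lemma exp_split: "ennreal (exp (\<gamma> * (x + y))) = ennreal (exp (\<gamma> * x)) * ennreal (exp (\<gamma> * y))"
  by (simp add: distrib_left exp_add ennreal_mult)

lemma sc_causal:
  assumes g: "causal g" and s: "s \<le> t" and w: "\<forall>s'<t. w' s' = w s'" and c: "\<forall>s'\<le>t. cs' s' = cs s'"
  shows "sc g x0 w' cs' s = sc g x0 w cs s"
proof -
  have xs: "\<forall>s'\<le>s. xproc a x0 w' s' = xproc a x0 w s'"
    using w s by (auto intro!: xproc_causal)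
  have cc: "\<forall>s'\<le>s. cs' s' = cs s'" using c s by auto
  show ?thesis unfolding sc_def
    using Delta_causal[OF g xs cc] act_causal[OF g xs cc] cc by simp
qed

lemma SS_step:
  assumes g: "causal g"
  shows "SS g x0 (w(t:=v)) (cs(Suc t:=b)) (Suc t) = SS g x0 w cs t + sc g x0 w cs t"
proof -
  have "sc g x0 (w(t:=v)) (cs(Suc t:=b)) s = sc g x0 w cs s" if "s \<le> t" for s
    by (rule sc_causal[OF g that]) auto
  then show ?thesis unfolding SS_def by simp
qed

lemma Delta_step:
  assumes g: "causal g" and t: "0 < t"
  shows "Delta g a (xproc a x0 (w(t:=v))) (cs(Suc t:=b)) (Suc t) =
     (if act g a (xproc a x0 w) cs t \<and> cs t then v else a * Delta g a (xproc a x0 w) cs t + v)"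
proof -
  let ?xs = "xproc a x0 w" and ?xs' = "xproc a x0 (w(t:=v))" and ?cs' = "cs(Suc t:=b)"
  have xs: "\<forall>s'\<le>t. ?xs' s' = ?xs s'" by (auto intro!: xproc_causal)
  have cc: "\<forall>s'\<le>t. ?cs' s' = cs s'" by auto
  have S: "sim g a ?xs' ?cs' t = sim g a ?xs cs t" by (rule sim_causal[OF g xs cc])
  have XH: "XH g a ?xs' ?cs' t = XH g a ?xs cs t" by (simp only: S)
  have x1: "?xs' (Suc t) = a * ?xs t + v" using xs by simp
  obtain t0 where t0: "t = Suc t0" using t by (cases t) auto
  show ?thesis
    unfolding Delta_Suc XH x1 unfolding t0 XH_Suc' Delta_Suc
    by (simp add: algebra_simps)
qed

lemma Delta_step0:
  "Delta g a (xproc a x0 (w(0:=v))) (cs(Suc 0:=b)) (Suc 0) = a * x0 + v"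
  by (simp add: Delta_Suc)

lemma Ik_Suc_eq: "Ik (Suc m) t F x0 w cs = (\<integral>\<^sup>+v. (\<Sum>b\<in>UNIV. ctw (cs t) b * Ik m (Suc t) F x0 (w(t:=v)) (cs(Suc t := b))) \<partial>NN)"
  by simp

lemma pull_const:
  "(\<integral>\<^sup>+v. (\<Sum>b\<in>UNIV. ctw c b * (K * VV m (if e then v else a*\<delta>+v) b)) \<partial>NN) = K * WW m \<delta> c e"
proof -
  have "(\<integral>\<^sup>+v. (\<Sum>b\<in>UNIV. ctw c b * (K * VV m (if e then v else a*\<delta>+v) b)) \<partial>NN)
      = (\<integral>\<^sup>+v. K * (\<Sum>b\<in>UNIV. ctw c b * VV m (if e then v else a*\<delta>+v) b) \<partial>NN)"
    by (simp add: sum_distrib_left mult.left_commute)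
  also have "\<dots> = K * WW m \<delta> c e" unfolding WW_def
    by (rule nn_integral_cmult) (rule WW_integrand_meas)
  finally show ?thesis .
qed

lemma VV0_le: "VV 0 \<delta> c \<le> EE \<delta> c u"
  by (cases u) auto

lemma VVSuc_le: "VV (Suc m) \<delta> c \<le> EE \<delta> c u * WW m \<delta> c (u \<and> c)"
  unfolding VV_Suc' by (cases u) auto

lemma DP_ge:
  assumes g: "causal g"
  shows "t + m = T \<Longrightarrow> 0 < t \<Longrightarrow>
    ennreal (exp (\<gamma> * SS g x0 w cs t)) * VV m (Delta g a (xproc a x0 w) cs t) (cs t) \<le> Ik m t (Fg g) x0 w cs"
proof (induction m arbitrary: t w cs)
  case 0
  then have tT: "t = T" by simp
  have "ennreal (exp (\<gamma> * SS g x0 w cs t)) * VV 0 (Delta g a (xproc a x0 w) cs t) (cs t)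
     \<le> ennreal (exp (\<gamma> * SS g x0 w cs t)) * EE (Delta g a (xproc a x0 w) cs t) (cs t) (act g a (xproc a x0 w) cs t)"
    by (intro mult_left_mono VV0_le) simp
  also have "\<dots> = Fg g x0 w cs"
    unfolding Fg_def total_SS tT EE_def SS_def by (simp add: exp_split sc_def)
  finally show ?case by simp
next
  case (Suc m)
  let ?xs = "xproc a x0 w"
  let ?D = "Delta g a ?xs cs t" and ?u = "act g a ?xs cs t"
  let ?K = "ennreal (exp (\<gamma> * SS g x0 w cs t)) * EE ?D (cs t) ?u"
  have "ennreal (exp (\<gamma> * SS g x0 w cs t)) * VV (Suc m) ?D (cs t)
      \<le> ennreal (exp (\<gamma> * SS g x0 w cs t)) * (EE ?D (cs t) ?u * WW m ?D (cs t) (?u \<and> cs t))"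
    by (intro mult_left_mono VVSuc_le) simp
  also have "\<dots> = ?K * WW m ?D (cs t) (?u \<and> cs t)" by (simp add: mult.assoc)
  also have "\<dots> = (\<integral>\<^sup>+v. (\<Sum>b\<in>UNIV. ctw (cs t) b * (?K * VV m (if ?u \<and> cs t then v else a * ?D + v) b)) \<partial>NN)"
    by (rule pull_const[symmetric])
  also have "\<dots> = (\<integral>\<^sup>+v. (\<Sum>b\<in>UNIV. ctw (cs t) b * (ennreal (exp (\<gamma> * SS g x0 (w(t:=v)) (cs(Suc t:=b)) (Suc t))) *
       VV m (Delta g a (xproc a x0 (w(t:=v))) (cs(Suc t:=b)) (Suc t)) ((cs(Suc t:=b)) (Suc t)))) \<partial>NN)"
    unfolding SS_step[OF g] Delta_step[OF g Suc.prems(2)]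
    by (simp add: exp_split EE_def sc_def)
  also have "\<dots> \<le> (\<integral>\<^sup>+v. (\<Sum>b\<in>UNIV. ctw (cs t) b * Ik m (Suc t) (Fg g) x0 (w(t:=v)) (cs(Suc t := b))) \<partial>NN)"
    by (intro nn_integral_mono sum_mono mult_left_mono Suc.IH) (use Suc.prems in auto)
  also have "\<dots> = Ik (Suc m) t (Fg g) x0 w cs" by simp
  finally show ?case .
qed

definition Z :: "real \<Rightarrow> bool \<Rightarrow> ennreal" where
  "Z x0 c = (if T = 0 then 1 else WW (T - 1) x0 c False)"

lemma exp_ge1: "0 \<le> x \<Longrightarrow> 1 \<le> ennreal (exp (\<gamma> * x))"
  using gam by (simp add: ennreal_ge_1)

lemma le_mult_ge1: "1 \<le> K \<Longrightarrow> y \<le> K * (y::ennreal)"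
  using mult_right_mono[of 1 K y] by simp

lemma SS1: "causal g \<Longrightarrow> SS g x0 (w(0:=v)) (cs(Suc 0:=b)) (Suc 0) = sc g x0 w cs 0"
  using SS_step[of g x0 w 0 v cs b] by (simp add: SS_def)

lemma DP0_ge:
  assumes g: "causal g"
  shows "Z x0 (cs 0) \<le> Ik T 0 (Fg g) x0 w cs"
proof (cases "T = 0")
  case True
  have one: "1 \<le> Fg g x0 w cs" unfolding Fg_def
    by (rule exp_ge1) (simp add: total_cost_def Let_def sum_nonneg stage_nonneg)
  have z: "Z x0 (cs 0) = 1" unfolding Z_def using True by simp
  show ?thesis unfolding z using one True by simp
next
  case False
  then obtain m where Suc: "T = Suc m" by (cases T) auto
  have "Z x0 (cs 0) = (\<integral>\<^sup>+v. (\<Sum>b\<in>UNIV. ctw (cs 0) b * (1 * VV m (if False then v else a * x0 + v) b)) \<partial>NN)"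
    unfolding pull_const Z_def using Suc by simp
  also have "\<dots> \<le> (\<integral>\<^sup>+v. (\<Sum>b\<in>UNIV. ctw (cs 0) b * (ennreal (exp (\<gamma> * SS g x0 (w(0:=v)) (cs(Suc 0:=b)) (Suc 0))) *
       VV m (Delta g a (xproc a x0 (w(0:=v))) (cs(Suc 0:=b)) (Suc 0)) ((cs(Suc 0:=b)) (Suc 0)))) \<partial>NN)"
    unfolding SS1[OF g] Delta_step0 if_False mult_1 fun_upd_same
    by (intro nn_integral_mono sum_mono mult_left_mono le_mult_ge1 exp_ge1) (auto simp: sc_def stage_nonneg)
  also have "\<dots> \<le> (\<integral>\<^sup>+v. (\<Sum>b\<in>UNIV. ctw (cs 0) b * Ik m (Suc 0) (Fg g) x0 (w(0:=v)) (cs(Suc 0 := b))) \<partial>NN)"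
    by (intro nn_integral_mono sum_mono mult_left_mono DP_ge[OF g]) (use Suc in auto)
  also have "\<dots> = Ik T 0 (Fg g) x0 w cs" using Suc by simp
  finally show ?thesis .
qed

end

context rem begin

abbreviation gp where "gp \<equiv> markov_rule psi"

lemma act_markov: "act (markov_rule \<psi>) a xs cs t = \<psi> t (Delta (markov_rule \<psi>) a xs cs t) (cs t)"
  by (cases t) (simp_all add: act_0 act_Suc markov_rule_def)

lemma sc0_gp: "sc gp x0 w cs 0 = 0"
  by (simp add: sc_def act_markov psi_def stage_cost_def)

lemma DP_eq:
  shows "t + m = T \<Longrightarrow> 0 < t \<Longrightarrow>
    ennreal (exp (\<gamma> * SS gp x0 w cs t)) * VV m (Delta gp a (xproc a x0 w) cs t) (cs t) = Ik m t (Fg gp) x0 w cs"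
proof (induction m arbitrary: t w cs)
  case 0
  then have tT: "t = T" by simp
  have "VV 0 (Delta gp a (xproc a x0 w) cs t) (cs t) = EE (Delta gp a (xproc a x0 w) cs t) (cs t) (act gp a (xproc a x0 w) cs t)"
    unfolding act_markov tT using psi_opt_T 0 by simp
  then have "ennreal (exp (\<gamma> * SS gp x0 w cs t)) * VV 0 (Delta gp a (xproc a x0 w) cs t) (cs t)
     = ennreal (exp (\<gamma> * SS gp x0 w cs t)) * EE (Delta gp a (xproc a x0 w) cs t) (cs t) (act gp a (xproc a x0 w) cs t)"
    by simp
  also have "\<dots> = Fg gp x0 w cs"
    unfolding Fg_def total_SS tT EE_def SS_def by (simp add: exp_split sc_def)
  finally show ?case by simp
next
  case (Suc m)
  let ?xs = "xproc a x0 w"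
  let ?D = "Delta gp a ?xs cs t" and ?u = "act gp a ?xs cs t"
  let ?K = "ennreal (exp (\<gamma> * SS gp x0 w cs t)) * EE ?D (cs t) ?u"
  have g: "causal gp" by (rule causal_markov)
  have tm: "T - t = Suc m" "T - t - 1 = m" using Suc.prems by auto
  have vv: "VV (Suc m) ?D (cs t) = EE ?D (cs t) ?u * WW m ?D (cs t) (?u \<and> cs t)"
    using psi_opt[of t ?D "cs t"] Suc.prems unfolding act_markov tm by simp
  have "ennreal (exp (\<gamma> * SS gp x0 w cs t)) * VV (Suc m) ?D (cs t)
      = ?K * WW m ?D (cs t) (?u \<and> cs t)" unfolding vv by (simp add: mult.assoc)
  also have "\<dots> = (\<integral>\<^sup>+v. (\<Sum>b\<in>UNIV. ctw (cs t) b * (?K * VV m (if ?u \<and> cs t then v else a * ?D + v) b)) \<partial>NN)"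
    by (rule pull_const[symmetric])
  also have "\<dots> = (\<integral>\<^sup>+v. (\<Sum>b\<in>UNIV. ctw (cs t) b * (ennreal (exp (\<gamma> * SS gp x0 (w(t:=v)) (cs(Suc t:=b)) (Suc t))) *
       VV m (Delta gp a (xproc a x0 (w(t:=v))) (cs(Suc t:=b)) (Suc t)) ((cs(Suc t:=b)) (Suc t)))) \<partial>NN)"
    unfolding SS_step[OF g] Delta_step[OF g Suc.prems(2)]
    by (simp add: exp_split EE_def sc_def)
  also have "\<dots> = (\<integral>\<^sup>+v. (\<Sum>b\<in>UNIV. ctw (cs t) b * Ik m (Suc t) (Fg gp) x0 (w(t:=v)) (cs(Suc t := b))) \<partial>NN)"
    by (intro nn_integral_cong sum.cong refl arg_cong2[where f="(*)"] Suc.IH) (use Suc.prems in auto)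
  also have "\<dots> = Ik (Suc m) t (Fg gp) x0 w cs" by simp
  finally show ?case .
qed

lemma DP0_eq: "Z x0 (cs 0) = Ik T 0 (Fg gp) x0 w cs"
proof (cases "T = 0")
  case True
  have one: "Fg gp x0 w cs = 1" unfolding Fg_def total_SS
    using True sc0_gp by (simp add: SS_def)
  have z: "Z x0 (cs 0) = 1" unfolding Z_def using True by simp
  show ?thesis unfolding z using one True by simp
next
  case False
  then obtain m where Suc: "T = Suc m" by (cases T) auto
  have g: "causal gp" by (rule causal_markov)
  have "Z x0 (cs 0) = (\<integral>\<^sup>+v. (\<Sum>b\<in>UNIV. ctw (cs 0) b * (1 * VV m (if False then v else a * x0 + v) b)) \<partial>NN)"
    unfolding pull_const Z_def using Suc by simp
  also have "\<dots> = (\<integral>\<^sup>+v. (\<Sum>b\<in>UNIV. ctw (cs 0) b * (ennreal (exp (\<gamma> * SS gp x0 (w(0:=v)) (cs(Suc 0:=b)) (Suc 0))) *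
       VV m (Delta gp a (xproc a x0 (w(0:=v))) (cs(Suc 0:=b)) (Suc 0)) ((cs(Suc 0:=b)) (Suc 0)))) \<partial>NN)"
    unfolding SS1[OF g] Delta_step0 sc0_gp by simp
  also have "\<dots> = (\<integral>\<^sup>+v. (\<Sum>b\<in>UNIV. ctw (cs 0) b * Ik m (Suc 0) (Fg gp) x0 (w(0:=v)) (cs(Suc 0 := b))) \<partial>NN)"
    by (intro nn_integral_cong sum.cong refl arg_cong2[where f="(*)"] DP_eq) (use Suc in auto)
  also have "\<dots> = Ik T 0 (Fg gp) x0 w cs" using Suc by simp
  finally show ?thesis .
qed

end

context rem begin

definition MR :: "'m measure \<Rightarrow> rule \<Rightarrow> (nat\<Rightarrow>bool) \<Rightarrow> bool" where
  "MR M g cs \<longleftrightarrow> (\<forall>t\<le>T. \<forall>X Uh D. (\<forall>s\<le>t. (\<lambda>\<omega>. X \<omega> s) \<in> borel_measurable M)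
      \<longrightarrow> (\<forall>s<t. (\<lambda>\<omega>. Uh \<omega> s) \<in> measurable M (count_space UNIV))
      \<longrightarrow> D \<in> borel_measurable M
      \<longrightarrow> (\<lambda>\<omega>. g t (X \<omega>) cs (Uh \<omega>) (D \<omega>)) \<in> measurable M (count_space UNIV))"

lemma MR_D:
  assumes "MR M g cs" "t \<le> T" "\<And>s. s \<le> t \<Longrightarrow> (\<lambda>\<omega>. X \<omega> s) \<in> borel_measurable M"
    "\<And>s. s < t \<Longrightarrow> (\<lambda>\<omega>. Uh \<omega> s) \<in> measurable M (count_space UNIV)" "D \<in> borel_measurable M"
  shows "(\<lambda>\<omega>. g t (X \<omega>) cs (Uh \<omega>) (D \<omega>)) \<in> measurable M (count_space UNIV)"
  using assms unfolding MR_def by blast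

lemma sim_meas:
  assumes g: "MR M g cs" and X: "\<And>s. s \<le> T \<Longrightarrow> (\<lambda>\<omega>. X \<omega> s) \<in> borel_measurable M"
  shows "t \<le> T \<Longrightarrow> (\<lambda>\<omega>. XH g a (X \<omega>) cs t) \<in> borel_measurable M \<and>
     (\<forall>s. (\<lambda>\<omega>. U g a (X \<omega>) cs t s) \<in> measurable M (count_space UNIV))"
proof (induction t)
  case 0
  have g0: "(\<lambda>\<omega>. g 0 (X \<omega>) cs ((\<lambda>\<omega>. \<lambda>_. False) \<omega>) ((\<lambda>\<omega>. 0) \<omega>)) \<in> measurable M (count_space UNIV)"
    by (rule MR_D[OF g]) (use X in auto)
  have "(\<lambda>\<omega>. U g a (X \<omega>) cs 0 s) \<in> measurable M (count_space UNIV)" for s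
  proof (cases "s = 0")
    case True then show ?thesis using g0 by simp
  next
    case False then show ?thesis by simp
  qed
  then show ?case by simp
next
  case (Suc t)
  then have IH: "(\<lambda>\<omega>. XH g a (X \<omega>) cs t) \<in> borel_measurable M"
     "\<And>s. (\<lambda>\<omega>. U g a (X \<omega>) cs t s) \<in> measurable M (count_space UNIV)" by auto
  have D: "(\<lambda>\<omega>. X \<omega> (Suc t) - a * XH g a (X \<omega>) cs t) \<in> borel_measurable M"
    using X[OF Suc.prems] IH(1) by measurable
  have gS: "(\<lambda>\<omega>. g (Suc t) (X \<omega>) cs (U g a (X \<omega>) cs t) (X \<omega> (Suc t) - a * XH g a (X \<omega>) cs t)) \<in> measurable M (count_space UNIV)"
    by (rule MR_D[OF g Suc.prems _ _ D]) (use X Suc.prems IH(2) in auto)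
  have U: "(\<lambda>\<omega>. U g a (X \<omega>) cs (Suc t) s) \<in> measurable M (count_space UNIV)" for s
  proof (cases "s = Suc t")
    case True then show ?thesis using gS by (simp add: U_Suc)
  next
    case False then show ?thesis using IH(2)[of s] by (simp add: U_Suc)
  qed
  have P: "Measurable.pred M (\<lambda>\<omega>. g (Suc t) (X \<omega>) cs (U g a (X \<omega>) cs t) (X \<omega> (Suc t) - a * XH g a (X \<omega>) cs t) \<and> cs (Suc t))"
    using gS by (cases "cs (Suc t)") simp_all
  have f1: "(\<lambda>\<omega>. X \<omega> (Suc t)) \<in> borel_measurable M" by (rule X[OF Suc.prems])
  have f2: "(\<lambda>\<omega>. a * XH g a (X \<omega>) cs t) \<in> borel_measurable M" using IH(1) by measurable
  have "(\<lambda>\<omega>. XH g a (X \<omega>) cs (Suc t)) \<in> borel_measurable M"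
    unfolding XH_Suc by (rule measurable_If[OF f1 f2]) (use P in \<open>simp add: pred_def\<close>)
  then show ?case using U by blast
qed

lemma total_meas:
  assumes g: "MR M g cs" and X: "\<And>s. s \<le> T \<Longrightarrow> (\<lambda>\<omega>. X \<omega> s) \<in> borel_measurable M"
  shows "(\<lambda>\<omega>. \<Sum>t\<le>T. stage_cost lam (Delta g a (X \<omega>) cs t) (cs t) (act g a (X \<omega>) cs t)) \<in> borel_measurable M"
proof (rule borel_measurable_sum)
  fix t assume "t \<in> {..T}"
  then have t: "t \<le> T" by simp
  have A[measurable]: "Measurable.pred M (\<lambda>\<omega>. act g a (X \<omega>) cs t)"
    unfolding act_def using sim_meas[of M g cs X, OF g X t] by blast
  have D[measurable]: "(\<lambda>\<omega>. Delta g a (X \<omega>) cs t) \<in> borel_measurable M"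
  proof (cases t)
    case 0 then show ?thesis by simp
  next
    case (Suc t0)
    then have "(\<lambda>\<omega>. XH g a (X \<omega>) cs t0) \<in> borel_measurable M" using sim_meas[of M g cs X t0, OF g X] t by auto
    then show ?thesis using X[OF t] unfolding Suc Delta_Suc by measurable
  qed
  show "(\<lambda>\<omega>. stage_cost lam (Delta g a (X \<omega>) cs t) (cs t) (act g a (X \<omega>) cs t)) \<in> borel_measurable M"
    unfolding stage_cost_def of_bool_def by measurable
qed

end

context rem begin

abbreviation MM where "MM \<equiv> model T \<sigma> q p01 p10"

lemma sets_N1[measurable_cong]: "sets N1 = sets borel" by (simp add: N1_def)

lemma X_meas: "s \<le> T \<Longrightarrow> (\<lambda>\<omega>. xproc a (fst \<omega>) (fst (snd \<omega>)) s) \<in> borel_measurable MM"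
proof (induction s)
  case 0
  have "fst \<in> measurable (N1 \<Otimes>\<^sub>M (PP T \<Otimes>\<^sub>M CC)) N1" by (rule measurable_fst)
  then have "fst \<in> borel_measurable (N1 \<Otimes>\<^sub>M (PP T \<Otimes>\<^sub>M CC))"
    using measurable_cong_sets[OF refl sets_N1] by simp
  then show ?case by (simp add: model_eq)
next
  case (Suc s)
  have s: "s \<in> {..<T}" using Suc.prems by simp
  have c: "(\<lambda>\<omega>. fst (snd \<omega>) s) \<in> borel_measurable (N1 \<Otimes>\<^sub>M (PP T \<Otimes>\<^sub>M CC))"
  proof -
    have "(\<lambda>w. w s) \<in> measurable (PP T) NN" by (rule measurable_component_singleton[OF s])
    moreover have "measurable (PP T) NN = measurable (PP T) borel" by (rule measurable_cong_sets) simp_all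
    ultimately have B: "(\<lambda>w. w s) \<in> borel_measurable (PP T)" by simp
    have A: "(\<lambda>\<omega>. fst (snd \<omega>)) \<in> measurable (N1 \<Otimes>\<^sub>M (PP T \<Otimes>\<^sub>M CC)) (PP T)"
      using measurable_comp[OF measurable_snd measurable_fst] by (simp add: comp_def)
    show ?thesis using measurable_comp[OF A B] by (simp add: comp_def)
  qed
  have IH: "(\<lambda>\<omega>. xproc a (fst \<omega>) (fst (snd \<omega>)) s) \<in> borel_measurable MM" using Suc by simp
  have "(\<lambda>\<omega>. a * xproc a (fst \<omega>) (fst (snd \<omega>)) s + fst (snd \<omega>) s) \<in> borel_measurable MM"
    using IH c unfolding model_eq by (intro borel_measurable_add borel_measurable_times measurable_const) auto
  then show ?case by simp
qed

lemma MR_hist: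
  fixes M :: "'m measure"
  assumes "\<phi> \<in> hist_policies T"
  shows "MR M (hist_rule \<phi>) cs"
  unfolding MR_def
proof (intro allI impI)
  fix t :: nat and X :: "'m \<Rightarrow> nat \<Rightarrow> real" and Uh :: "'m \<Rightarrow> nat \<Rightarrow> bool" and D :: "'m \<Rightarrow> real"
  assume t: "t \<le> T" and X: "\<forall>s\<le>t. (\<lambda>\<omega>. X \<omega> s) \<in> borel_measurable M"
    and Uh: "\<forall>s<t. (\<lambda>\<omega>. Uh \<omega> s) \<in> measurable M (count_space UNIV)"
  have ph: "\<phi> t \<in> info_space t \<rightarrow>\<^sub>M count_space UNIV" using assms t by (simp add: hist_policies_def)
  have m: "(\<lambda>\<omega>. (restrict (X \<omega>) {..t}, restrict cs {..t}, restrict (Uh \<omega>) {..<t})) \<in> measurable M (info_space t)"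
    unfolding info_space_def
    by (intro measurable_Pair measurable_restrict) (use X Uh in auto)
  show "(\<lambda>\<omega>. hist_rule \<phi> t (X \<omega>) cs (Uh \<omega>) (D \<omega>)) \<in> measurable M (count_space UNIV)"
    unfolding hist_rule_def using measurable_compose[OF m ph] by simp
qed

lemma MR_markov:
  fixes M :: "'m measure"
  assumes "\<psi> \<in> markov_policies T"
  shows "MR M (markov_rule \<psi>) cs"
  unfolding MR_def
proof (intro allI impI)
  fix t :: nat and X :: "'m \<Rightarrow> nat \<Rightarrow> real" and Uh :: "'m \<Rightarrow> nat \<Rightarrow> bool" and D :: "'m \<Rightarrow> real"
  assume t: "t \<le> T" and D: "D \<in> borel_measurable M"
  have ps: "(\<lambda>(\<delta>, b). \<psi> t \<delta> b) \<in> borel \<Otimes>\<^sub>M count_space UNIV \<rightarrow>\<^sub>M count_space UNIV"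
    using assms t by (simp add: markov_policies_def)
  have m: "(\<lambda>\<omega>. (D \<omega>, cs t)) \<in> measurable M (borel \<Otimes>\<^sub>M count_space UNIV)"
    using D by measurable
  show "(\<lambda>\<omega>. markov_rule \<psi> t (X \<omega>) cs (Uh \<omega>) (D \<omega>)) \<in> measurable M (count_space UNIV)"
    unfolding markov_rule_def using measurable_compose[OF m ps] by simp
qed

lemma total_cost_alt: "total_cost T a lam g \<omega> =
  (\<Sum>t\<le>T. stage_cost lam (Delta g a (xproc a (fst \<omega>) (fst (snd \<omega>))) (snd (snd \<omega>)) t) (snd (snd \<omega>) t)
       (act g a (xproc a (fst \<omega>) (fst (snd \<omega>))) (snd (snd \<omega>)) t))"
  by (cases \<omega>) (simp add: total_cost_def Let_def)

lemma cost_meas: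
  assumes g: "\<And>cs. MR MM g cs"
  shows "(\<lambda>\<omega>. ennreal (exp (\<gamma> * total_cost T a lam g \<omega>))) \<in> borel_measurable MM"
proof -
  have f: "(\<lambda>\<omega>. \<Sum>t\<le>T. stage_cost lam (Delta g a (xproc a (fst \<omega>) (fst (snd \<omega>))) cs t) (cs t)
       (act g a (xproc a (fst \<omega>) (fst (snd \<omega>))) cs t)) \<in> borel_measurable MM" for cs
    by (rule total_meas[OF g]) (rule X_meas)
  have sn: "(\<lambda>\<omega>. snd (snd \<omega>)) \<in> measurable MM CC" unfolding model_eq
    using measurable_comp[OF measurable_snd measurable_snd] by (simp add: comp_def)
  have "(\<lambda>x. x) \<in> measurable CC (count_space AA)"
    by (rule measurable_ident_sets) (simp add: sets_CC)
  then have sn': "(\<lambda>\<omega>. snd (snd \<omega>)) \<in> measurable MM (count_space AA)"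
    using measurable_comp[OF sn] by (simp add: comp_def)
  have "(\<lambda>\<omega>. total_cost T a lam g \<omega>) \<in> borel_measurable MM"
    unfolding total_cost_alt
    by (rule measurable_compose_countable'[OF f sn']) (rule countable_finite[OF finite_AA])
  moreover have "(\<lambda>x. ennreal (exp (\<gamma> * x))) \<in> borel_measurable borel" by measurable
  ultimately show ?thesis using measurable_compose by blast
qed

end

context rem begin

primrec xh_of :: "(nat \<Rightarrow> real) \<Rightarrow> (nat \<Rightarrow> bool) \<Rightarrow> (nat \<Rightarrow> bool) \<Rightarrow> nat \<Rightarrow> real" where
  "xh_of xs cs uh 0 = 0"
| "xh_of xs cs uh (Suc s) = (if uh (Suc s) \<and> cs (Suc s) then xs (Suc s) else a * xh_of xs cs uh s)"

lemma xh_of_XH: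
  "(\<forall>s'\<le>s. uh s' = act g a xs cs s') \<Longrightarrow> (\<forall>s'\<le>s. xs' s' = xs s') \<Longrightarrow> (\<forall>s'\<le>s. cs' s' = cs s')
   \<Longrightarrow> xh_of xs' cs' uh s = XH g a xs cs s"
proof (induction s)
  case 0 then show ?case by simp
next
  case (Suc s)
  then have IH: "xh_of xs' cs' uh s = XH g a xs cs s" by auto
  show ?case using Suc.prems IH by (simp add: XH_Suc')
qed

definition phi_of :: "markov_policy \<Rightarrow> hist_policy" where
  "phi_of \<psi> t h = (case h of (xs, cs, uh) \<Rightarrow> \<psi> t (if t = 0 then 0 else xs t - a * xh_of xs cs uh (t - 1)) (cs t))"

lemma sim_trans: "sim (hist_rule (phi_of \<psi>)) a xs cs t = sim (markov_rule \<psi>) a xs cs t"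
proof (induction t)
  case 0
  show ?case by (simp add: hist_rule_def phi_of_def markov_rule_def)
next
  case (Suc t)
  let ?gh = "hist_rule (phi_of \<psi>)" and ?gm = "markov_rule \<psi>"
  have xh: "xh_of (restrict xs {..Suc t}) (restrict cs {..Suc t}) (restrict (U ?gm a xs cs t) {..<Suc t}) t = XH ?gm a xs cs t"
    by (rule xh_of_XH) (auto simp: U_le)
  have step: "?gh (Suc t) xs cs (U ?gm a xs cs t) \<delta> = ?gm (Suc t) xs cs (U ?gm a xs cs t) \<delta>"
    if "\<delta> = xs (Suc t) - a * XH ?gm a xs cs t" for \<delta>
    using that xh by (simp add: hist_rule_def phi_of_def markov_rule_def)
  show ?case
  proof (rule prod_eqI)
    show "U ?gh a xs cs (Suc t) = U ?gm a xs cs (Suc t)"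
      unfolding U_Suc Suc.IH using step by simp
    show "XH ?gh a xs cs (Suc t) = XH ?gm a xs cs (Suc t)"
      unfolding XH_Suc Suc.IH using step by simp
  qed
qed

lemma Delta_trans: "Delta (hist_rule (phi_of \<psi>)) a xs cs t = Delta (markov_rule \<psi>) a xs cs t"
  unfolding Delta_def sim_trans ..
lemma act_trans: "act (hist_rule (phi_of \<psi>)) a xs cs t = act (markov_rule \<psi>) a xs cs t"
  unfolding act_def sim_trans ..

lemma total_trans: "total_cost T a lam (hist_rule (phi_of \<psi>)) \<omega> = total_cost T a lam (markov_rule \<psi>) \<omega>"
  by (cases \<omega>) (simp add: total_cost_def Let_def Delta_trans act_trans)

lemma risk_trans: "risk_cost T a \<sigma> q p01 p10 lam \<gamma> (hist_rule (phi_of \<psi>)) = risk_cost T a \<sigma> q p01 p10 lam \<gamma> (markov_rule \<psi>)"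
  unfolding risk_cost_def total_trans ..

lemma phi_of_hist:
  assumes psi: "\<psi> \<in> markov_policies T"
  shows "phi_of \<psi> \<in> hist_policies T"
  unfolding hist_policies_def
proof (intro CollectI allI impI)
  fix t assume t: "t \<le> T"
  let ?I = "info_space t"
  have cx: "(\<lambda>h. fst h s) \<in> borel_measurable ?I" if "s \<le> t" for s
  proof -
    have "(\<lambda>x. x s) \<in> measurable (PiM {..t} (\<lambda>_. borel)) borel"
      by (rule measurable_component_singleton) (use that in simp)
    then show ?thesis unfolding info_space_def
      using measurable_comp[OF measurable_fst] by (simp add: comp_def)
  qed
  have cc: "(\<lambda>h. fst (snd h) s) \<in> measurable ?I (count_space UNIV)" if "s \<le> t" for s
  proof -
    have "(\<lambda>x. x s) \<in> measurable (PiM {..t} (\<lambda>_. count_space UNIV)) (count_space UNIV)"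
      by (rule measurable_component_singleton) (use that in simp)
    then show ?thesis unfolding info_space_def
      using measurable_comp[OF measurable_comp[OF measurable_snd measurable_fst]] by (simp add: comp_def)
  qed
  have cu: "(\<lambda>h. snd (snd h) s) \<in> measurable ?I (count_space UNIV)" if "s < t" for s
  proof -
    have "(\<lambda>x. x s) \<in> measurable (PiM {..<t} (\<lambda>_. count_space UNIV)) (count_space UNIV)"
      by (rule measurable_component_singleton) (use that in simp)
    then show ?thesis unfolding info_space_def
      using measurable_comp[OF measurable_comp[OF measurable_snd measurable_snd]] by (simp add: comp_def)
  qed
  have xm: "s < t \<Longrightarrow> (\<lambda>h. xh_of (fst h) (fst (snd h)) (snd (snd h)) s) \<in> borel_measurable ?I" for s
  proof (induction s)
    case 0 then show ?case by simp
  next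
    case (Suc s)
    have P: "Measurable.pred ?I (\<lambda>h. snd (snd h) (Suc s) \<and> fst (snd h) (Suc s))"
      using cu[OF Suc.prems] cc[of "Suc s"] Suc.prems by (intro pred_intros_logic) auto
    have f2: "(\<lambda>h. a * xh_of (fst h) (fst (snd h)) (snd (snd h)) s) \<in> borel_measurable ?I"
      using Suc by (intro borel_measurable_times measurable_const) auto
    show ?case unfolding xh_of.simps
      by (rule measurable_If[OF cx f2]) (use P Suc.prems in \<open>auto simp: pred_def\<close>)
  qed
  have D: "(\<lambda>h. if t = 0 then 0 else fst h t - a * xh_of (fst h) (fst (snd h)) (snd (snd h)) (t - 1)) \<in> borel_measurable ?I"
  proof (cases "t = 0")
    case True then show ?thesis by simp
  next
    case False
    then have "(\<lambda>h. fst h t - a * xh_of (fst h) (fst (snd h)) (snd (snd h)) (t - 1)) \<in> borel_measurable ?I"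
      using cx[of t] xm[of "t - 1"] by (intro borel_measurable_diff borel_measurable_times measurable_const) auto
    then show ?thesis using False by simp
  qed
  have ps: "(\<lambda>(\<delta>, b). \<psi> t \<delta> b) \<in> borel \<Otimes>\<^sub>M count_space UNIV \<rightarrow>\<^sub>M count_space UNIV"
    using psi t by (simp add: markov_policies_def)
  have m: "(\<lambda>h. (if t = 0 then 0 else fst h t - a * xh_of (fst h) (fst (snd h)) (snd (snd h)) (t - 1), fst (snd h) t))
      \<in> measurable ?I (borel \<Otimes>\<^sub>M count_space UNIV)"
    by (rule measurable_Pair[OF D cc]) simp
  have e: "phi_of \<psi> t = (\<lambda>h. \<psi> t (if t = 0 then 0 else fst h t - a * xh_of (fst h) (fst (snd h)) (snd (snd h)) (t - 1)) (fst (snd h) t))"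
    by (auto simp: phi_of_def fun_eq_iff split: prod.split)
  show "phi_of \<psi> t \<in> ?I \<rightarrow>\<^sub>M count_space UNIV"
    unfolding e using measurable_compose[OF m ps] by simp
qed

lemma Fg_eta: "(\<lambda>x0 w cs. ennreal (exp (\<gamma> * total_cost T a lam g (x0, w, cs)))) = Fg g"
  by (simp add: fun_eq_iff Fg_def)

lemma risk_as_Ik:
  assumes "\<And>cs. MR MM g cs"
  shows "risk_cost T a \<sigma> q p01 p10 lam \<gamma> g =
    (\<integral>\<^sup>+x0. (\<Sum>b\<in>UNIV. qw b * Ik T 0 (Fg g) x0 (\<lambda>_. undefined) ((\<lambda>_. False)(0 := b))) \<partial>N1)"
  unfolding risk_cost_def risk_conv[OF cost_meas[OF assms]] Fg_eta ..

lemma psi_le_hist: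
  assumes "\<phi> \<in> hist_policies T"
  shows "risk_cost T a \<sigma> q p01 p10 lam \<gamma> (markov_rule psi) \<le> risk_cost T a \<sigma> q p01 p10 lam \<gamma> (hist_rule \<phi>)"
proof -
  have "risk_cost T a \<sigma> q p01 p10 lam \<gamma> (markov_rule psi) =
      (\<integral>\<^sup>+x0. (\<Sum>b\<in>UNIV. qw b * Ik T 0 (Fg gp) x0 (\<lambda>_. undefined) ((\<lambda>_. False)(0 := b))) \<partial>N1)"
    by (rule risk_as_Ik) (rule MR_markov[OF psi_markov])
  also have "\<dots> = (\<integral>\<^sup>+x0. (\<Sum>b\<in>UNIV. qw b * Z x0 b) \<partial>N1)"
    using DP0_eq[of _ "(\<lambda>_. False)(0 := _)"] by simp
  also have "\<dots> \<le> (\<integral>\<^sup>+x0. (\<Sum>b\<in>UNIV. qw b * Ik T 0 (Fg (hist_rule \<phi>)) x0 (\<lambda>_. undefined) ((\<lambda>_. False)(0 := b))) \<partial>N1)"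
    using DP0_ge[OF causal_hist, of _ "(\<lambda>_. False)(0 := _)"]
    by (intro nn_integral_mono sum_mono mult_left_mono) auto
  also have "\<dots> = risk_cost T a \<sigma> q p01 p10 lam \<gamma> (hist_rule \<phi>)"
    by (rule risk_as_Ik[symmetric]) (rule MR_hist[OF assms])
  finally show ?thesis .
qed

lemma main:
  "(INF \<phi>\<in>hist_policies T. risk_cost T a \<sigma> q p01 p10 lam \<gamma> (hist_rule \<phi>))
       = (INF \<psi>\<in>markov_policies T. risk_cost T a \<sigma> q p01 p10 lam \<gamma> (markov_rule \<psi>))"
proof (rule antisym)
  show "(INF \<phi>\<in>hist_policies T. risk_cost T a \<sigma> q p01 p10 lam \<gamma> (hist_rule \<phi>))
       \<le> (INF \<psi>\<in>markov_policies T. risk_cost T a \<sigma> q p01 p10 lam \<gamma> (markov_rule \<psi>))"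
  proof (rule INF_mono)
    fix \<psi> assume "\<psi> \<in> markov_policies T"
    then show "\<exists>\<phi>\<in>hist_policies T. risk_cost T a \<sigma> q p01 p10 lam \<gamma> (hist_rule \<phi>) \<le> risk_cost T a \<sigma> q p01 p10 lam \<gamma> (markov_rule \<psi>)"
      using phi_of_hist risk_trans by (intro bexI[of _ "phi_of \<psi>"]) auto
  qed
next
  have "(INF \<psi>\<in>markov_policies T. risk_cost T a \<sigma> q p01 p10 lam \<gamma> (markov_rule \<psi>))
      \<le> risk_cost T a \<sigma> q p01 p10 lam \<gamma> (markov_rule psi)"
    by (rule INF_lower[OF psi_markov])
  also have "\<dots> \<le> (INF \<phi>\<in>hist_policies T. risk_cost T a \<sigma> q p01 p10 lam \<gamma> (hist_rule \<phi>))"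
    by (rule INF_greatest) (rule psi_le_hist)
  finally show "(INF \<psi>\<in>markov_policies T. risk_cost T a \<sigma> q p01 p10 lam \<gamma> (markov_rule \<psi>))
      \<le> (INF \<phi>\<in>hist_policies T. risk_cost T a \<sigma> q p01 p10 lam \<gamma> (hist_rule \<phi>))" .
qed

end

theorem lemma1:
  fixes T :: nat and a \<sigma> q p01 p10 lam \<gamma> :: real
  assumes "\<sigma> > 0" and "lam > 0" and "\<gamma> > 0"
    and "0 \<le> q" "q \<le> 1" and "0 \<le> p01" "p01 \<le> 1" and "0 \<le> p10" "p10 \<le> 1"
  shows "(INF \<phi>\<in>hist_policies T. risk_cost T a \<sigma> q p01 p10 lam \<gamma> (hist_rule \<phi>))
       = (INF \<psi>\<in>markov_policies T. risk_cost T a \<sigma> q p01 p10 lam \<gamma> (markov_rule \<psi>))"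
proof -
  interpret rem T a \<sigma> q p01 p10 lam \<gamma> using assms by unfold_locales
  show ?thesis by (rule main)
qed


end
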